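(* Let $\rho\in[-1,1]$, let $A\in\mathbb{R}^{n\times n}$ be a normalized elliptic matrix with parameter $\rho$, $\boldsymbol u^0\in\mathbb{R}^n$, $B\in\mathbb{R}^{n\times p}$, and let $h_0,h_1,\dots:\mathbb{R}^{p+1}\to\mathbb{R}$ be functions with a fixed partial derivative $\partial_1h_k$ in the first argument. Consider the iterates $\boldsymbol u^{k+1}=A\boldsymbol q^k-\rho d_k\boldsymbol q^{k-1}$, $k\ge0$, with the notation of the context. Then $\boldsymbol u^1=A\boldsymbol q^0=\mathcal I_0(A)$ and for every $k\ge1$, $$\boldsymbol u^{k+1}=\sum_{\ell=1}^k\alpha^k_\ell\boldsymbol u^\ell+\rho\,Q_k(Q_k^\top Q_k)^\dagger\Big(\boldsymbol v^{k,k}-\sum_{\ell=1}^k\alpha^k_\ell\boldsymbol v^{k,\ell-1}\Big)+\mathcal I_k(A).$$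
   Context: $\mathrm{Elliptic}(n,\rho)$: $M_{ii}\sim\mathcal N(0,1+\rho)$, for $i<j$ $(M_{ij},M_{ji})$ centered Gaussian with variances 1 and covariance $\rho$, all independent across $\{M_{ii}\}\cup\{(M_{ij},M_{ji})\}_{i<j}$; $A$ normalized elliptic means $\sqrt nA\sim\mathrm{Elliptic}(n,\rho)$. For $h:\mathbb{R}^{p+1}\to\mathbb{R}$, $h(\boldsymbol u,B)=(h(u_i,B_{i1},\dots,B_{ip}))_i$. Notation: $\boldsymbol q^k=h_k(\boldsymbol u^k,B)$ for $k\ge0$, $\boldsymbol q^{-1}=0$; $d_k=\frac1n\sum_i\partial_1h_k(u^k_i,B_{i,*})$ for $k\ge1$, $d_0=0$; $Q_k=[\boldsymbol q^0,\dots,\boldsymbol q^{k-1}]$, $U_k=[\boldsymbol u^1,\dots,\boldsymbol u^k]\in\mathbb{R}^{n\times k}$; $\dagger$ denotes the Moore–Penrose pseudo-inverse; $P_k=Q_k(Q_k^\top Q_k)^\dagger Q_k^\top$ (orthogonal projection on the column span of $Q_k$), $P_k^\perp=I_n-P_k$, $P_0=0$, $P_0^\perp=I_n$; $\boldsymbol\alpha^k=(\alpha^k_1,\dots,\alpha^k_k)^\top=(Q_k^\top Q_k)^\dagger Q_k^\top\boldsymbol q^k$; for $k\ge1,\ell\ge0$, $\boldsymbol v^{k,\ell}=U_k^\top\boldsymbol q^\ell-d_\ell Q_k^\top\boldsymbol q^{\ell-1}$; $\mathcal I_k(A)=(A-\rho P_kA^\top)P_k^\perp\boldsymbol q^k$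 for $k\ge0$. *)

theory Defs
  imports "Jordan_Normal_Form.Matrix"
begin

definition pinv :: "real mat \<Rightarrow> real mat" where
  "pinv M = (THE X. X \<in> carrier_mat (dim_col M) (dim_row M) \<and> M * X * M = M \<and> X * M * X = X
              \<and> transpose_mat (M * X) = M * X \<and> transpose_mat (X * M) = X * M)"

text \<open>Row-wise application h(u,B) = (h(u_i, B_i1, ..., B_ip))_i; rows of B are vectors of length p.\<close>
definition happ :: "(real \<Rightarrow> real vec \<Rightarrow> real) \<Rightarrow> real vec \<Rightarrow> real mat \<Rightarrow> real vec" where
  "happ f u B = vec (dim_row B) (\<lambda>i. f (u $ i) (row B i))"

definition qv :: "(nat \<Rightarrow> real \<Rightarrow> real vec \<Rightarrow> real) \<Rightarrow> (nat \<Rightarrow> real vec) \<Rightarrow> real mat \<Rightarrow> nat \<Rightarrow> real vec" where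
  "qv h u B k = happ (h k) (u k) B"

text \<open>qprev h u B l = q^(l-1), with q^(-1) = 0.\<close>
definition qprev :: "(nat \<Rightarrow> real \<Rightarrow> real vec \<Rightarrow> real) \<Rightarrow> (nat \<Rightarrow> real vec) \<Rightarrow> real mat \<Rightarrow> nat \<Rightarrow> real vec" where
  "qprev h u B l = (if l = 0 then 0\<^sub>v (dim_row B) else qv h u B (l - 1))"

text \<open>d_k = (1/n) sum_i dh_k(u^k_i, B_i), dh_k the (fixed) partial derivative of h_k in its first argument; d_0 = 0.\<close>
definition dk :: "(nat \<Rightarrow> real \<Rightarrow> real vec \<Rightarrow> real) \<Rightarrow> (nat \<Rightarrow> real vec) \<Rightarrow> real mat \<Rightarrow> nat \<Rightarrow> real" where
  "dk dh u B k = (if k = 0 then 0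
     else (1 / real (dim_row B)) * (\<Sum>i<dim_row B. dh k (u k $ i) (row B i)))"

definition Qm :: "(nat \<Rightarrow> real \<Rightarrow> real vec \<Rightarrow> real) \<Rightarrow> (nat \<Rightarrow> real vec) \<Rightarrow> real mat \<Rightarrow> nat \<Rightarrow> real mat" where
  "Qm h u B k = mat (dim_row B) k (\<lambda>(i, j). qv h u B j $ i)"

definition Um :: "(nat \<Rightarrow> real vec) \<Rightarrow> nat \<Rightarrow> nat \<Rightarrow> real mat" where
  "Um u n k = mat n k (\<lambda>(i, j). u (j + 1) $ i)"

definition Pm :: "(nat \<Rightarrow> real \<Rightarrow> real vec \<Rightarrow> real) \<Rightarrow> (nat \<Rightarrow> real vec) \<Rightarrow> real mat \<Rightarrow> nat \<Rightarrow> real mat" where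
  "Pm h u B k = (let Q = Qm h u B k in Q * pinv (transpose_mat Q * Q) * transpose_mat Q)"

text \<open>alpha^k = (Q_k^T Q_k)^dagger Q_k^T q^k, a vector of length k; alpha^k_l = alpha $ (l - 1).\<close>
definition alph :: "(nat \<Rightarrow> real \<Rightarrow> real vec \<Rightarrow> real) \<Rightarrow> (nat \<Rightarrow> real vec) \<Rightarrow> real mat \<Rightarrow> nat \<Rightarrow> real vec" where
  "alph h u B k = (let Q = Qm h u B k in pinv (transpose_mat Q * Q) *\<^sub>v (transpose_mat Q *\<^sub>v qv h u B k))"

definition vv :: "(nat \<Rightarrow> real \<Rightarrow> real vec \<Rightarrow> real) \<Rightarrow> (nat \<Rightarrow> real \<Rightarrow> real vec \<Rightarrow> real) \<Rightarrow> (nat \<Rightarrow> real vec) \<Rightarrow> real mat \<Rightarrow> nat \<Rightarrow> nat \<Rightarrow> real vec" where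
  "vv h dh u B k l = transpose_mat (Um u (dim_row B) k) *\<^sub>v qv h u B l
      - dk dh u B l \<cdot>\<^sub>v (transpose_mat (Qm h u B k) *\<^sub>v qprev h u B l)"

definition Ik :: "real \<Rightarrow> (nat \<Rightarrow> real \<Rightarrow> real vec \<Rightarrow> real) \<Rightarrow> (nat \<Rightarrow> real vec) \<Rightarrow> real mat \<Rightarrow> real mat \<Rightarrow> nat \<Rightarrow> real vec" where
  "Ik \<rho> h u B A k = (let n = dim_row B; P = Pm h u B k in
      (A - \<rho> \<cdot>\<^sub>m (P * transpose_mat A)) *\<^sub>v ((1\<^sub>m n - P) *\<^sub>v qv h u B k))"

end

theory Submission
  imports Defs "Jordan_Normal_Form.Determinant"
begin

lemma self_sp_zero: fixes v :: "real vec" assumes "v \<in> carrier_vec a" "v \<bullet> v = 0" shows "v = 0\<^sub>v a"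
proof -
  have "(\<Sum>i\<in>{0..<a}. v $ i * v $ i) = 0" using assms unfolding scalar_prod_def by auto
  hence "\<forall>i\<in>{0..<a}. v $ i * v $ i = 0" by (subst sum_nonneg_eq_0_iff[symmetric]) auto
  thus ?thesis using assms by (intro eq_vecI) auto
qed

lemma gram_inv: fixes F :: "real mat"
  assumes F: "F \<in> carrier_mat a r" and inj: "\<forall>x\<in>carrier_vec r. F *\<^sub>v x = 0\<^sub>v a \<longrightarrow> x = 0\<^sub>v r"
  shows "\<exists>N\<in>carrier_mat r r. N * (transpose_mat F * F) = 1\<^sub>m r \<and> (transpose_mat F * F) * N = 1\<^sub>m r"
proof -
  have G: "transpose_mat F * F \<in> carrier_mat r r" using F by auto
  have "det (transpose_mat F * F) \<noteq> 0"
  proof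
    assume "det (transpose_mat F * F) = 0"
    then obtain v where v: "v \<in> carrier_vec r" "v \<noteq> 0\<^sub>v r" "(transpose_mat F * F) *\<^sub>v v = 0\<^sub>v r"
      using det_0_iff_vec_prod_zero_field[OF G] by auto
    have "(transpose_mat F *\<^sub>v (F *\<^sub>v v)) \<bullet> v = (F *\<^sub>v v) \<bullet> (F *\<^sub>v v)"
      by (rule transpose_vec_mult_scalar[OF F v(1)]) (use F v in auto)
    moreover have "transpose_mat F *\<^sub>v (F *\<^sub>v v) = 0\<^sub>v r" using v F
      by (metis assoc_mult_mat_vec carrier_matI index_transpose_mat(2,3) carrier_matD)
    ultimately have "(F *\<^sub>v v) \<bullet> (F *\<^sub>v v) = 0" using v by simp
    hence "F *\<^sub>v v = 0\<^sub>v a" by (rule self_sp_zero[rotated]) (use F v in auto)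
    thus False using inj v by auto
  qed
  from det_non_zero_imp_unit[OF G this, of "()"]
  show ?thesis unfolding Units_def ring_mat_simps by auto
qed

lemma mv_idx: "i < dim_row F \<Longrightarrow> dim_vec x = dim_col F \<Longrightarrow> (F *\<^sub>v x) $ i = (\<Sum>l<dim_col F. F $$ (i,l) * x $ l)"
  by (simp add: scalar_prod_def atLeast0LessThan)

lemma mm_idx: "i < dim_row F \<Longrightarrow> j < dim_col C \<Longrightarrow> dim_col F = dim_row C \<Longrightarrow> (F * C) $$ (i,j) = (\<Sum>l<dim_col F. F $$ (i,l) * C $$ (l,j))"
  by (simp add: scalar_prod_def atLeast0LessThan)

lemma rank_fact: fixes M :: "real mat"
  shows "M \<in> carrier_mat a b \<Longrightarrow> \<exists>r F C. F \<in> carrier_mat a r \<and> C \<in> carrier_mat r b \<and> M = F * C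
    \<and> (\<forall>x\<in>carrier_vec r. F *\<^sub>v x = 0\<^sub>v a \<longrightarrow> x = 0\<^sub>v r)
    \<and> (\<forall>y\<in>carrier_vec r. transpose_mat C *\<^sub>v y = 0\<^sub>v b \<longrightarrow> y = 0\<^sub>v r)"
proof (induction b arbitrary: M)
  case 0
  show ?case
    apply (rule exI[of _ 0], rule exI[of _ "0\<^sub>m a 0"], rule exI[of _ "0\<^sub>m 0 0"])
    using 0 by (auto intro!: eq_matI eq_vecI)
next
  case (Suc b)
  define M' where "M' = mat a b (\<lambda>(i,j). M $$ (i,j))"
  define c where "c = col M b"
  have M': "M' \<in> carrier_mat a b" unfolding M'_def by auto
  from Suc.IH[OF M'] obtain r F' C' where F': "F' \<in> carrier_mat a r" and C': "C' \<in> carrier_mat r b"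
    and MFC: "M' = F' * C'" and injF: "\<forall>x\<in>carrier_vec r. F' *\<^sub>v x = 0\<^sub>v a \<longrightarrow> x = 0\<^sub>v r"
    and injC: "\<forall>y\<in>carrier_vec r. transpose_mat C' *\<^sub>v y = 0\<^sub>v b \<longrightarrow> y = 0\<^sub>v r" by blast
  have Mij: "M $$ (i,j) = (\<Sum>l<r. F' $$ (i,l) * C' $$ (l,j))" if "i < a" "j < b" for i j
  proof -
    have "M $$ (i,j) = M' $$ (i,j)" using that unfolding M'_def by auto
    also have "\<dots> = (\<Sum>l<r. F' $$ (i,l) * C' $$ (l,j))" unfolding MFC using that F' C'
      by (subst mm_idx) auto
    finally show ?thesis .
  qed
  have ci: "c $ i = M $$ (i,b)" if "i < a" for i using that Suc.prems unfolding c_def by auto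
  show ?case
  proof (cases "\<exists>w\<in>carrier_vec r. c = F' *\<^sub>v w")
    case True
    then obtain w where w: "w \<in> carrier_vec r" "c = F' *\<^sub>v w" by blast
    define C where "C = mat r (Suc b) (\<lambda>(i,j). if j < b then C' $$ (i,j) else w $ i)"
    have C: "C \<in> carrier_mat r (Suc b)" unfolding C_def by auto
    show ?thesis
    proof (intro exI conjI)
      show "F' \<in> carrier_mat a r" by fact
      show "C \<in> carrier_mat r (Suc b)" by fact
      show "M = F' * C"
      proof (rule eq_matI)
        fix i j assume ij: "i < dim_row (F' * C)" "j < dim_col (F' * C)"
        hence i: "i < a" and j: "j < Suc b" using F' C by auto
        have "(F' * C) $$ (i,j) = (\<Sum>l<r. F' $$ (i,l) * C $$ (l,j))"
          using i j F' C by (subst mm_idx) auto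
        also have "\<dots> = M $$ (i,j)"
        proof (cases "j < b")
          case True thus ?thesis using Mij[OF i True] unfolding C_def by (auto intro!: sum.cong)
        next
          case False
          hence jb: "j = b" using j by auto
          have "(\<Sum>l<r. F' $$ (i,l) * C $$ (l,j)) = (F' *\<^sub>v w) $ i"
            using F' w i jb by (subst mv_idx) (auto simp: C_def intro!: sum.cong)
          also have "\<dots> = M $$ (i,j)" using ci[OF i] w jb by simp
          finally show ?thesis .
        qed
        finally show "M $$ (i,j) = (F' * C) $$ (i,j)" by simp
      qed (use Suc.prems F' C in auto)
      show "\<forall>x\<in>carrier_vec r. F' *\<^sub>v x = 0\<^sub>v a \<longrightarrow> x = 0\<^sub>v r" by fact
      show "\<forall>y\<in>carrier_vec r. transpose_mat C *\<^sub>v y = 0\<^sub>v (Suc b) \<longrightarrow> y = 0\<^sub>v r"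
      proof (intro ballI impI)
        fix y :: "real vec" assume y: "y \<in> carrier_vec r" and z: "transpose_mat C *\<^sub>v y = 0\<^sub>v (Suc b)"
        have "transpose_mat C' *\<^sub>v y = 0\<^sub>v b"
        proof (rule eq_vecI)
          fix j assume "j < dim_vec (0\<^sub>v b :: real vec)"
          hence j: "j < b" by auto
          have "(transpose_mat C' *\<^sub>v y) $ j = (\<Sum>l<r. C' $$ (l,j) * y $ l)"
            using C' y j by (subst mv_idx) auto
          also have "\<dots> = (transpose_mat C *\<^sub>v y) $ j"
            using C y j by (subst mv_idx) (auto simp: C_def)
          also have "\<dots> = 0" using z j by simp
          finally show "(transpose_mat C' *\<^sub>v y) $ j = 0\<^sub>v b $ j" using j by simp
        qed (use C' in auto)
        thus "y = 0\<^sub>v r" using injC y by auto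
      qed
    qed
  next
    case False
    define F where "F = mat a (Suc r) (\<lambda>(i,l). if l < r then F' $$ (i,l) else c $ i)"
    define C where "C = mat (Suc r) (Suc b) (\<lambda>(l,j). if l < r then (if j < b then C' $$ (l,j) else 0)
        else (if j < b then 0 else 1))"
    have F: "F \<in> carrier_mat a (Suc r)" unfolding F_def by auto
    have C: "C \<in> carrier_mat (Suc r) (Suc b)" unfolding C_def by auto
    show ?thesis
    proof (intro exI conjI)
      show "F \<in> carrier_mat a (Suc r)" by fact
      show "C \<in> carrier_mat (Suc r) (Suc b)" by fact
      show "M = F * C"
      proof (rule eq_matI)
        fix i j assume ij: "i < dim_row (F * C)" "j < dim_col (F * C)"
        hence i: "i < a" and j: "j < Suc b" using F C by auto
        have "(F * C) $$ (i,j) = (\<Sum>l<Suc r. F $$ (i,l) * C $$ (l,j))"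
          using i j F C by (subst mm_idx) auto
        also have "\<dots> = (\<Sum>l<r. F $$ (i,l) * C $$ (l,j)) + F $$ (i,r) * C $$ (r,j)" by simp
        also have "\<dots> = M $$ (i,j)"
        proof (cases "j < b")
          case True thus ?thesis using Mij[OF i True] i j unfolding C_def F_def by (auto intro!: sum.cong)
        next
          case False
          hence jb: "j = b" using j by auto
          thus ?thesis using i ci[OF i] unfolding C_def F_def by auto
        qed
        finally show "M $$ (i,j) = (F * C) $$ (i,j)" by simp
      qed (use Suc.prems F C in auto)
      show "\<forall>x\<in>carrier_vec (Suc r). F *\<^sub>v x = 0\<^sub>v a \<longrightarrow> x = 0\<^sub>v (Suc r)"
      proof (intro ballI impI)
        fix x :: "real vec" assume x: "x \<in> carrier_vec (Suc r)" and z: "F *\<^sub>v x = 0\<^sub>v a"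
        define x' where "x' = vec r (\<lambda>l. x $ l)"
        have Fx: "(\<Sum>l<r. F' $$ (i,l) * x $ l) + c $ i * x $ r = 0" if i: "i < a" for i
        proof -
          have "0 = (F *\<^sub>v x) $ i" using z i by simp
          also have "\<dots> = (\<Sum>l<Suc r. F $$ (i,l) * x $ l)" using F x i by (subst mv_idx) auto
          also have "\<dots> = (\<Sum>l<r. F' $$ (i,l) * x $ l) + c $ i * x $ r" using i by (simp add: F_def)
          finally show ?thesis by simp
        qed
        have t0: "x $ r = 0"
        proof (rule ccontr)
          assume t: "x $ r \<noteq> 0"
          define w where "w = vec r (\<lambda>l. - x $ l / x $ r)"
          have "c = F' *\<^sub>v w"
          proof (rule eq_vecI)
            fix i assume "i < dim_vec (F' *\<^sub>v w)"
            hence i: "i < a" using F' by auto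
            have "(F' *\<^sub>v w) $ i = (\<Sum>l<r. F' $$ (i,l) * (- x $ l / x $ r))"
              using F' i by (subst mv_idx) (auto simp: w_def)
            also have "\<dots> = - (\<Sum>l<r. F' $$ (i,l) * x $ l) / x $ r"
              by (simp add: sum_divide_distrib sum_negf)
            also have "\<dots> = c $ i" using Fx[OF i] t by (simp add: field_simps)
            finally show "c $ i = (F' *\<^sub>v w) $ i" by simp
          qed (use F' Suc.prems in \<open>auto simp: c_def\<close>)
          moreover have "w \<in> carrier_vec r" unfolding w_def by auto
          ultimately show False using False by blast
        qed
        have "F' *\<^sub>v x' = 0\<^sub>v a"
        proof (rule eq_vecI)
          fix i assume "i < dim_vec (0\<^sub>v a :: real vec)"
          hence i: "i < a" by auto
          have "(F' *\<^sub>v x') $ i = (\<Sum>l<r. F' $$ (i,l) * x $ l)"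
            using F' i by (subst mv_idx) (auto simp: x'_def)
          also have "\<dots> = 0" using Fx[OF i] t0 by simp
          finally show "(F' *\<^sub>v x') $ i = 0\<^sub>v a $ i" using i by simp
        qed (use F' in auto)
        hence "x' = 0\<^sub>v r" using injF unfolding x'_def by auto
        hence "\<forall>l<r. x $ l = 0" unfolding x'_def by (metis index_vec index_zero_vec(1))
        thus "x = 0\<^sub>v (Suc r)" using t0 x by (intro eq_vecI) (auto simp: less_Suc_eq)
      qed
      show "\<forall>y\<in>carrier_vec (Suc r). transpose_mat C *\<^sub>v y = 0\<^sub>v (Suc b) \<longrightarrow> y = 0\<^sub>v (Suc r)"
      proof (intro ballI impI)
        fix y :: "real vec" assume y: "y \<in> carrier_vec (Suc r)" and z: "transpose_mat C *\<^sub>v y = 0\<^sub>v (Suc b)"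
        define y' where "y' = vec r (\<lambda>l. y $ l)"
        have Cy: "(\<Sum>l<Suc r. C $$ (l,j) * y $ l) = 0" if j: "j < Suc b" for j
        proof -
          have "0 = (transpose_mat C *\<^sub>v y) $ j" using z j by simp
          also have "\<dots> = (\<Sum>l<Suc r. C $$ (l,j) * y $ l)" using C y j by (subst mv_idx) auto
          finally show ?thesis by simp
        qed
        have yr: "y $ r = 0" using Cy[of b] by (simp add: C_def)
        have "transpose_mat C' *\<^sub>v y' = 0\<^sub>v b"
        proof (rule eq_vecI)
          fix j assume "j < dim_vec (0\<^sub>v b :: real vec)"
          hence j: "j < b" by auto
          have "(transpose_mat C' *\<^sub>v y') $ j = (\<Sum>l<r. C' $$ (l,j) * y $ l)"
            using C' j by (subst mv_idx) (auto simp: y'_def)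
          also have "\<dots> = (\<Sum>l<Suc r. C $$ (l,j) * y $ l)" using j by (simp add: C_def)
          also have "\<dots> = 0" using Cy j by simp
          finally show "(transpose_mat C' *\<^sub>v y') $ j = 0\<^sub>v b $ j" using j by simp
        qed (use C' in auto)
        hence "y' = 0\<^sub>v r" using injC unfolding y'_def by auto
        hence "\<forall>l<r. y $ l = 0" unfolding y'_def by (metis index_vec index_zero_vec(1))
        thus "y = 0\<^sub>v (Suc r)" using yr y by (intro eq_vecI) (auto simp: less_Suc_eq)
      qed
    qed
  qed
qed

lemma inv_sym: fixes N N' :: "real mat"
  assumes "N \<in> carrier_mat r r" "N' \<in> carrier_mat r r" "N' * N = 1\<^sub>m r" "N * N' = 1\<^sub>m r" "transpose_mat N = N"
  shows "transpose_mat N' = N'"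
proof -
  have "transpose_mat (N * N') = transpose_mat N' * transpose_mat N"
    using assms by (intro transpose_mult) auto
  hence "transpose_mat N' * N = 1\<^sub>m r"
    using assms by simp
  hence "transpose_mat N' * N * N' = N'" using assms by simp
  thus ?thesis using assms by (simp add: assoc_mult_mat[of _ r r _ r _ r])
qed

lemma assoc_dim: "dim_col A = dim_row B \<Longrightarrow> dim_col B = dim_row C \<Longrightarrow> A * B * C = A * (B * C)"
  by (rule assoc_mult_mat[of A "dim_row A" "dim_col A" B "dim_col B" C "dim_col C"]) auto

lemma transpose_dim: "dim_col A = dim_row (B :: real mat) \<Longrightarrow> transpose_mat (A * B) = transpose_mat B * transpose_mat A"
  by (rule transpose_mult[of A "dim_row A" "dim_col A" B "dim_col B"]) auto

definition penrose :: "real mat \<Rightarrow> real mat \<Rightarrow> bool" where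
  "penrose M X \<longleftrightarrow> X \<in> carrier_mat (dim_col M) (dim_row M) \<and> M * X * M = M \<and> X * M * X = X
              \<and> transpose_mat (M * X) = M * X \<and> transpose_mat (X * M) = X * M"

lemma pinv_exists: fixes M :: "real mat" assumes M: "M \<in> carrier_mat a b"
  shows "\<exists>X. penrose M X"
proof -
  obtain r F C where F: "F \<in> carrier_mat a r" and C: "C \<in> carrier_mat r b" and MFC: "M = F * C"
    and iF: "\<forall>x\<in>carrier_vec r. F *\<^sub>v x = 0\<^sub>v a \<longrightarrow> x = 0\<^sub>v r"
    and iC: "\<forall>y\<in>carrier_vec r. transpose_mat C *\<^sub>v y = 0\<^sub>v b \<longrightarrow> y = 0\<^sub>v r"
    using rank_fact[OF M] by blast
  obtain N1 where N1: "N1 \<in> carrier_mat r r" "N1 * (transpose_mat F * F) = 1\<^sub>m r" "(transpose_mat F * F) * N1 = 1\<^sub>m r"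
    using gram_inv[OF F iF] by blast
  have Ct: "transpose_mat C \<in> carrier_mat b r" using C by auto
  obtain N2 where N2: "N2 \<in> carrier_mat r r" "N2 * (C * transpose_mat C) = 1\<^sub>m r" "(C * transpose_mat C) * N2 = 1\<^sub>m r"
    using gram_inv[OF Ct iC] by auto
  have N1s: "transpose_mat N1 = N1"
    by (rule inv_sym[of "transpose_mat F * F" r]) (use N1 F in \<open>auto simp: transpose_mult\<close>)
  have N2s: "transpose_mat N2 = N2"
    by (rule inv_sym[of "C * transpose_mat C" r]) (use N2 C in \<open>auto simp: transpose_mult\<close>)
  have r1: "C * (transpose_mat C * (N2 * Z)) = Z" if "Z \<in> carrier_mat r m" for Z m
  proof -
    have "C * (transpose_mat C * (N2 * Z)) = C * ((transpose_mat C * N2) * Z)"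
      using assoc_mult_mat[OF Ct N2(1) that] by simp
    also have "\<dots> = (C * (transpose_mat C * N2)) * Z"
      by (rule assoc_mult_mat[symmetric, OF C mult_carrier_mat[OF Ct N2(1)] that])
    also have "\<dots> = ((C * transpose_mat C) * N2) * Z"
      using assoc_mult_mat[OF C Ct N2(1)] by simp
    also have "\<dots> = Z" unfolding N2(3) using that by simp
    finally show ?thesis .
  qed
  have r2: "N1 * (transpose_mat F * (F * Z)) = Z" if "Z \<in> carrier_mat r m" for Z m
  proof -
    have Ft: "transpose_mat F \<in> carrier_mat r a" using F by auto
    have "N1 * (transpose_mat F * (F * Z)) = N1 * ((transpose_mat F * F) * Z)"
      using assoc_mult_mat[OF Ft F that] by simp
    also have "\<dots> = (N1 * (transpose_mat F * F)) * Z"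
      by (rule assoc_mult_mat[symmetric, OF N1(1) mult_carrier_mat[OF Ft F] that])
    also have "\<dots> = Z" unfolding N1(2) using that by simp
    finally show ?thesis .
  qed
  define X where "X = transpose_mat C * (N2 * (N1 * transpose_mat F))"
  have X: "X \<in> carrier_mat b a" unfolding X_def using C F N1 N2 by auto
  have r1': "C * (transpose_mat C * (N2 * Z)) = Z" if "dim_row Z = r" for Z
    by (rule r1[OF carrier_matI[OF that refl]])
  have r2': "N1 * (transpose_mat F * (F * Z)) = Z" if "dim_row Z = r" for Z
    by (rule r2[OF carrier_matI[OF that refl]])
  note cars = carrier_matD[OF F] carrier_matD[OF C] carrier_matD[OF N1(1)] carrier_matD[OF N2(1)] carrier_matD[OF X]
  have MX: "M * X = F * (N1 * transpose_mat F)" unfolding MFC X_def using cars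
    by (simp add: r1' assoc_dim)
  have XM: "X * M = transpose_mat C * (N2 * C)" unfolding MFC X_def using cars
    by (simp add: r2' assoc_dim)
  show ?thesis unfolding penrose_def
  proof (intro exI conjI)
    show "X \<in> carrier_mat (dim_col M) (dim_row M)" using X M by auto
    show "M * X * M = M" unfolding MX unfolding MFC using cars by (simp add: r2' assoc_dim)
    show "X * M * X = X" unfolding XM unfolding X_def using cars by (simp add: r1' assoc_dim)
    show "transpose_mat (M * X) = M * X" unfolding MX using cars N1s by (simp add: transpose_dim assoc_dim)
    show "transpose_mat (X * M) = X * M" unfolding XM using cars N2s by (simp add: transpose_dim assoc_dim)
  qed
qed

lemma penrose_unique: assumes M: "M \<in> carrier_mat a b" and X: "penrose M X" and Y: "penrose M Y"
  shows "X = Y"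
proof -
  have Xc: "X \<in> carrier_mat b a" and Yc: "Y \<in> carrier_mat b a" using X Y M unfolding penrose_def by auto
  note d = carrier_matD[OF M] carrier_matD[OF Xc] carrier_matD[OF Yc]
  have x1: "M * (X * M) = M" and x2: "X * (M * X) = X" and x3: "transpose_mat X * transpose_mat M = M * X"
    and x4: "transpose_mat M * transpose_mat X = X * M"
    using X d unfolding penrose_def by (simp_all add: assoc_dim transpose_dim)
  have y1: "M * (Y * M) = M" and y2: "Y * (M * Y) = Y" and y3: "transpose_mat Y * transpose_mat M = M * Y"
    and y4: "transpose_mat M * transpose_mat Y = Y * M"
    using Y d unfolding penrose_def by (simp_all add: assoc_dim transpose_dim)
  have Mt1: "transpose_mat M = transpose_mat M * (M * Y)"
  proof -
    have "transpose_mat M = transpose_mat (M * (Y * M))" using y1 by simp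
    also have "\<dots> = transpose_mat M * (transpose_mat Y * transpose_mat M)" using d by (simp add: assoc_dim transpose_dim)
    finally show ?thesis unfolding y3 .
  qed
  have Mt2: "transpose_mat M = (X * M) * transpose_mat M"
  proof -
    have "transpose_mat M = transpose_mat ((M * X) * M)" using x1 d by (simp add: assoc_dim)
    also have "\<dots> = (transpose_mat M * transpose_mat X) * transpose_mat M" using d by (simp add: transpose_dim assoc_dim)
    finally show ?thesis unfolding x4 .
  qed
  have "X = X * (transpose_mat X * transpose_mat M)" using x2 x3 by simp
  also have "\<dots> = X * (transpose_mat X * (transpose_mat M * (M * Y)))" by (simp only: Mt1[symmetric])
  also have "\<dots> = X * ((transpose_mat X * transpose_mat M) * (M * Y))" using d by (simp add: assoc_dim)
  also have "\<dots> = X * ((M * X) * (M * Y))" unfolding x3 ..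
  also have "\<dots> = (X * (M * X)) * M * Y" using d by (simp add: assoc_dim)
  also have "\<dots> = X * M * Y" unfolding x2 ..
  finally have XX: "X = X * M * Y" .
  have "Y = (Y * M) * Y" using y2 d by (simp add: assoc_dim)
  also have "\<dots> = (transpose_mat M * transpose_mat Y) * Y" unfolding y4 ..
  also have "\<dots> = ((X * M) * transpose_mat M * transpose_mat Y) * Y" by (simp only: Mt2[symmetric])
  also have "\<dots> = X * M * (transpose_mat M * transpose_mat Y) * Y" using d by (simp add: assoc_dim)
  also have "\<dots> = X * M * (Y * M) * Y" unfolding y4 ..
  also have "\<dots> = X * M * (Y * (M * Y))" using d by (simp add: assoc_dim)
  also have "\<dots> = X * M * Y" unfolding y2 ..
  finally show ?thesis using XX by simp
qed

lemma pinv_penrose: assumes M: "M \<in> carrier_mat a b" shows "penrose M (pinv M)"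
proof -
  obtain X where X: "penrose M X" using pinv_exists[OF M] by blast
  have "pinv M = X" unfolding pinv_def
  proof (rule the_equality)
    show "X \<in> carrier_mat (dim_col M) (dim_row M) \<and> M * X * M = M \<and> X * M * X = X \<and> transpose_mat (M * X) = M * X \<and> transpose_mat (X * M) = X * M"
      using X unfolding penrose_def by blast
    fix Z assume "Z \<in> carrier_mat (dim_col M) (dim_row M) \<and> M * Z * M = M \<and> Z * M * Z = Z \<and> transpose_mat (M * Z) = M * Z \<and> transpose_mat (Z * M) = Z * M"
    hence "penrose M Z" unfolding penrose_def by blast
    from penrose_unique[OF M X this] show "Z = X" by simp
  qed
  thus ?thesis using X by simp
qed

lemma gram_cancel: fixes Q Y :: "real mat"
  assumes Q: "Q \<in> carrier_mat n k" and Y: "Y \<in> carrier_mat k k"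
  and GYG: "transpose_mat Q * Q * Y * (transpose_mat Q * Q) = transpose_mat Q * Q"
  shows "Q * Y * (transpose_mat Q * Q) = Q"
proof -
  define R where "R = Q * Y * (transpose_mat Q * Q) - Q"
  note d = carrier_matD[OF Q] carrier_matD[OF Y]
  have R: "R \<in> carrier_mat n k" unfolding R_def using Q Y by auto
  have QR: "transpose_mat Q * R = 0\<^sub>m k k"
  proof -
    have "transpose_mat Q * R = transpose_mat Q * (Q * Y * (transpose_mat Q * Q)) - transpose_mat Q * Q"
      unfolding R_def using Q Y by (subst mult_minus_distrib_mat[of _ k n]) auto
    also have "transpose_mat Q * (Q * Y * (transpose_mat Q * Q)) = transpose_mat Q * Q * Y * (transpose_mat Q * Q)"
      using d by (simp add: assoc_dim)
    finally show ?thesis unfolding GYG using Q by simp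
  qed
  have RR: "transpose_mat R * R = 0\<^sub>m k k"
  proof -
    have "transpose_mat R = transpose_mat (Q * Y * (transpose_mat Q * Q)) - transpose_mat Q"
      unfolding R_def using Q Y by (intro eq_matI) auto
    also have "transpose_mat (Q * Y * (transpose_mat Q * Q)) = (transpose_mat Q * Q) * transpose_mat Y * transpose_mat Q"
      using d by (simp add: assoc_dim transpose_dim)
    finally have "transpose_mat R * R = ((transpose_mat Q * Q) * transpose_mat Y * transpose_mat Q - transpose_mat Q) * R" by simp
    also have "\<dots> = (transpose_mat Q * Q) * transpose_mat Y * transpose_mat Q * R - transpose_mat Q * R"
      using Q Y R by (subst minus_mult_distrib_mat[of _ k n]) auto
    also have "(transpose_mat Q * Q) * transpose_mat Y * transpose_mat Q * R = (transpose_mat Q * Q) * transpose_mat Y * (transpose_mat Q * R)"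
      using d R by (simp add: assoc_dim carrier_matD)
    finally show ?thesis unfolding QR using Q Y R by simp
  qed
  have R0: "R = 0\<^sub>m n k"
  proof (rule eq_matI)
    fix i j assume ij: "i < dim_row (0\<^sub>m n k :: real mat)" "j < dim_col (0\<^sub>m n k :: real mat)"
    have "col R j \<bullet> col R j = (transpose_mat R * R) $$ (j,j)" using R ij by auto
    also have "\<dots> = 0" unfolding RR using ij by auto
    finally have "col R j = 0\<^sub>v n" by (rule self_sp_zero[rotated]) (use R in auto)
    hence "col R j $ i = 0" using ij by auto
    thus "R $$ (i,j) = 0\<^sub>m n k $$ (i,j)" using R ij by auto
  qed (use R in auto)
  have "Q * Y * (transpose_mat Q * Q) = R + Q" unfolding R_def using Q Y by (intro eq_matI) auto
  thus ?thesis using R0 Q by simp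
qed


lemma mv_assoc: assumes "dim_col A = dim_row B" "dim_vec v = dim_col B" shows "(A * B) *\<^sub>v v = A *\<^sub>v (B *\<^sub>v v)"
  by (rule assoc_mult_mat_vec[OF carrier_matI[OF refl refl] carrier_matI[OF sym[OF assms(1)] refl] carrier_vecI[OF assms(2)]])

lemma mv_minus: fixes A :: "real mat"
  shows "dim_vec v = dim_col A \<Longrightarrow> dim_vec w = dim_col A \<Longrightarrow> A *\<^sub>v (v - w) = A *\<^sub>v v - A *\<^sub>v w"
  by (intro eq_vecI) (auto simp: scalar_prod_def sum_subtractf algebra_simps)

lemma mv_plus: fixes A :: "real mat"
  shows "dim_vec v = dim_col A \<Longrightarrow> dim_vec w = dim_col A \<Longrightarrow> A *\<^sub>v (v + w) = A *\<^sub>v v + A *\<^sub>v w"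
  by (intro eq_vecI) (auto simp: scalar_prod_def sum.distrib algebra_simps)

lemma mv_smult: fixes A :: "real mat"
  shows "dim_vec v = dim_col A \<Longrightarrow> A *\<^sub>v (c \<cdot>\<^sub>v v) = c \<cdot>\<^sub>v (A *\<^sub>v v)"
  by (intro eq_vecI) (auto simp: scalar_prod_def sum_distrib_left algebra_simps)

lemma mat_minus_mv: fixes A :: "real mat"
  shows "dim_row A = dim_row B \<Longrightarrow> dim_col A = dim_col B \<Longrightarrow> dim_vec v = dim_col A \<Longrightarrow> (A - B) *\<^sub>v v = A *\<^sub>v v - B *\<^sub>v v"
  by (intro eq_vecI) (simp_all add: mv_idx sum_subtractf[symmetric] left_diff_distrib del: index_mult_mat_vec)

lemma mat_plus_mv: fixes A :: "real mat"
  shows "dim_row A = dim_row B \<Longrightarrow> dim_col A = dim_col B \<Longrightarrow> dim_vec v = dim_col A \<Longrightarrow> (A + B) *\<^sub>v v = A *\<^sub>v v + B *\<^sub>v v"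
  by (intro eq_vecI) (simp_all add: mv_idx sum.distrib[symmetric] distrib_right del: index_mult_mat_vec)

lemma smat_mv: fixes A :: "real mat"
  shows "dim_vec v = dim_col A \<Longrightarrow> (c \<cdot>\<^sub>m A) *\<^sub>v v = c \<cdot>\<^sub>v (A *\<^sub>v v)"
  by (intro eq_vecI) (simp_all add: mv_idx sum_distrib_left mult.assoc del: index_mult_mat_vec)

lemma one_mv: fixes v :: "real vec" shows "dim_vec v = n \<Longrightarrow> 1\<^sub>m n *\<^sub>v v = v"
  by auto

lemma mv_unit: fixes Q :: "real mat" shows "j < dim_col Q \<Longrightarrow> Q *\<^sub>v unit_vec (dim_col Q) j = col Q j"
  by (intro eq_vecI) auto

lemma mv_zero: fixes Q :: "real mat" shows "Q *\<^sub>v 0\<^sub>v (dim_col Q) = 0\<^sub>v (dim_row Q)"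
  by (intro eq_vecI) auto

lemma main_step:
  fixes n p :: nat and \<rho> :: real and A B :: "real mat"
    and h dh :: "nat \<Rightarrow> real \<Rightarrow> real vec \<Rightarrow> real" and u :: "nat \<Rightarrow> real vec"
  assumes A: "A \<in> carrier_mat n n" and B: "B \<in> carrier_mat n p"
    and uc: "\<And>l. u l \<in> carrier_vec n"
    and iter: "\<And>k. u (Suc k) = A *\<^sub>v qv h u B k - (\<rho> * dk dh u B k) \<cdot>\<^sub>v qprev h u B k"
    and k: "1 \<le> k"
  shows "u (Suc k) =
       vec n (\<lambda>i. (\<Sum>l=1..k. alph h u B k $ (l - 1) * u l $ i))
       + \<rho> \<cdot>\<^sub>v ((Qm h u B k * pinv (transpose_mat (Qm h u B k) * Qm h u B k)) *\<^sub>v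
            vec k (\<lambda>j. vv h dh u B k k $ j - (\<Sum>l=1..k. alph h u B k $ (l - 1) * vv h dh u B k (l - 1) $ j)))
       + Ik \<rho> h u B A k"
proof -
  have dB: "dim_row B = n" using B by auto
  have qc: "\<And>l. qv h u B l \<in> carrier_vec n" unfolding qv_def happ_def dB by auto
  have qpc: "\<And>l. qprev h u B l \<in> carrier_vec n" unfolding qprev_def using qc dB by auto
  have qd: "\<And>l. dim_vec (qv h u B l) = n" using qc carrier_vecD by blast
  have qpd: "\<And>l. dim_vec (qprev h u B l) = n" using qpc carrier_vecD by blast
  have ud: "\<And>l. dim_vec (u l) = n" using uc carrier_vecD by blast
  define Q where "Q = Qm h u B k"
  have Q: "Q \<in> carrier_mat n k" unfolding Q_def Qm_def dB by auto
  have Qij: "\<And>i j. i < n \<Longrightarrow> j < k \<Longrightarrow> Q $$ (i,j) = qv h u B j $ i" unfolding Q_def Qm_def dB by auto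
  note dQ = carrier_matD[OF Q]
  have colQ: "\<And>j. j < k \<Longrightarrow> col Q j = qv h u B j" using dQ qd Qij by (intro eq_vecI) auto
  define G where "G = transpose_mat Q * Q"
  define X where "X = pinv G"
  have G: "G \<in> carrier_mat k k" unfolding G_def using Q by auto
  have pen: "penrose G X" unfolding X_def by (rule pinv_penrose[OF G])
  have X: "X \<in> carrier_mat k k" and GXG: "G * X * G = G" using pen G unfolding penrose_def by auto
  note dX = carrier_matD[OF X] and dG = carrier_matD[OF G] and dA = carrier_matD[OF A]
  have QXG: "Q * X * G = Q" using gram_cancel[OF Q X] GXG unfolding G_def by simp
  have Gt: "transpose_mat G = G" unfolding G_def using dQ by (simp add: transpose_dim)
  have GXtG: "G * transpose_mat X * G = G"
  proof -
    have "transpose_mat (G * X * G) = transpose_mat G * transpose_mat X * transpose_mat G"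
      using dG dX by (simp add: transpose_dim assoc_dim)
    thus ?thesis using GXG Gt by simp
  qed
  have QXtG: "Q * transpose_mat X * G = Q" unfolding G_def
    by (rule gram_cancel[OF Q]) (use GXtG X in \<open>auto simp: G_def\<close>)
  have GXQt: "G * X * transpose_mat Q = transpose_mat Q"
  proof -
    have "transpose_mat (Q * transpose_mat X * G) = transpose_mat G * X * transpose_mat Q"
      using dQ dX dG by (simp add: transpose_dim assoc_dim)
    thus ?thesis using QXtG Gt by simp
  qed
  define P where "P = Q * X * transpose_mat Q"
  have P: "P \<in> carrier_mat n n" unfolding P_def using Q X by auto
  have PQ: "P * Q = Q"
  proof -
    have "P * Q = Q * X * G" unfolding P_def G_def using dQ dX by (simp add: assoc_dim)
    thus ?thesis using QXG by simp
  qed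
  have PQv: "\<And>v. dim_vec v = k \<Longrightarrow> P *\<^sub>v (Q *\<^sub>v v) = Q *\<^sub>v v"
    using PQ P Q by (metis mv_assoc carrier_matD)
  define q where "q = qv h u B k"
  have q: "q \<in> carrier_vec n" unfolding q_def by (rule qc)
  define \<alpha> where "\<alpha> = X *\<^sub>v (transpose_mat Q *\<^sub>v q)"
  have \<alpha>: "\<alpha> \<in> carrier_vec k" unfolding \<alpha>_def carrier_vec_def using dX by simp
  have alph: "alph h u B k = \<alpha>" unfolding alph_def Let_def \<alpha>_def X_def G_def Q_def q_def ..
  have Pm: "Pm h u B k = P" unfolding Pm_def Let_def P_def X_def G_def Q_def ..
  have Pq: "P *\<^sub>v q = Q *\<^sub>v \<alpha>" unfolding P_def \<alpha>_def using dQ dX q by (simp add: mv_assoc)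
  define U where "U = Um u n k"
  have U: "U \<in> carrier_mat n k" unfolding U_def Um_def by auto
  have Uij: "\<And>i j. i < n \<Longrightarrow> j < k \<Longrightarrow> U $$ (i,j) = u (Suc j) $ i" unfolding U_def Um_def by auto
  define D where "D = mat n k (\<lambda>(i,j). dk dh u B j * qprev h u B j $ i)"
  define S where "S = mat k k (\<lambda>(l,j). if j \<noteq> 0 \<and> l = j - 1 then dk dh u B j else 0)"
  have D: "D \<in> carrier_mat n k" unfolding D_def by auto
  have S: "S \<in> carrier_mat k k" unfolding S_def by auto
  note dU = carrier_matD[OF U] and dD = carrier_matD[OF D] and dS = carrier_matD[OF S]
  have DQS: "D = Q * S"
  proof (rule eq_matI)
    fix i j assume "i < dim_row (Q * S)" "j < dim_col (Q * S)"
    hence i: "i < n" and j: "j < k" using dQ dS by auto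
    have "(Q * S) $$ (i,j) = (\<Sum>l<k. Q $$ (i,l) * S $$ (l,j))" using i j dQ dS by (subst mm_idx) auto
    also have "\<dots> = D $$ (i,j)"
    proof (cases "j = 0")
      case True
      thus ?thesis using i j unfolding S_def D_def by (simp add: dk_def)
    next
      case False
      have "(\<Sum>l<k. Q $$ (i,l) * S $$ (l,j)) = (\<Sum>l<k. if l = j - 1 then Q $$ (i,l) * dk dh u B j else 0)"
        using False j unfolding S_def by (intro sum.cong) auto
      also have "\<dots> = Q $$ (i, j - 1) * dk dh u B j" using j False by simp
      also have "\<dots> = D $$ (i,j)" using i j False Qij[of i "j - 1"] unfolding D_def qprev_def by simp
      finally show ?thesis .
    qed
    finally show "D $$ (i,j) = (Q * S) $$ (i,j)" by simp
  qed (use dQ dS dD in auto)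
  have AQ: "A * Q = U + \<rho> \<cdot>\<^sub>m D"
  proof (rule eq_matI)
    fix i j assume "i < dim_row (U + \<rho> \<cdot>\<^sub>m D)" "j < dim_col (U + \<rho> \<cdot>\<^sub>m D)"
    hence i: "i < n" and j: "j < k" using dU dD by auto
    have "(A * Q) $$ (i,j) = row A i \<bullet> col Q j" using i j dA dQ by simp
    also have "\<dots> = (A *\<^sub>v qv h u B j) $ i" using i j dA colQ by simp
    also have "\<dots> = u (Suc j) $ i + (\<rho> * dk dh u B j) * qprev h u B j $ i"
      using iter[of j] i qc[of j] qpc[of j] dA by simp
    also have "\<dots> = (U + \<rho> \<cdot>\<^sub>m D) $$ (i,j)" using i j dU dD Uij unfolding D_def by simp
    finally show "(A * Q) $$ (i,j) = (U + \<rho> \<cdot>\<^sub>m D) $$ (i,j)" .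
  qed (use dA dQ dU dD in auto)
  have dq: "dim_vec q = n" using q by auto
  have d\<alpha>: "dim_vec \<alpha> = k" using \<alpha> by auto
  define r where "r = q - Q *\<^sub>v \<alpha>"
  have dr: "dim_vec r = n" unfolding r_def using dq dQ by simp
  have Qtr: "transpose_mat Q *\<^sub>v r = 0\<^sub>v k"
  proof -
    have e: "transpose_mat Q *\<^sub>v (Q *\<^sub>v \<alpha>) = (G * X * transpose_mat Q) *\<^sub>v q"
      unfolding \<alpha>_def G_def using dQ dX dq by (simp add: mv_assoc assoc_dim)
    have "transpose_mat Q *\<^sub>v r = transpose_mat Q *\<^sub>v q - transpose_mat Q *\<^sub>v (Q *\<^sub>v \<alpha>)"
      unfolding r_def using dQ dq d\<alpha> by (simp add: mv_minus)
    also have "\<dots> = transpose_mat Q *\<^sub>v q - transpose_mat Q *\<^sub>v q" unfolding e GXQt ..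
    also have "\<dots> = 0\<^sub>v k" by (rule minus_cancel_vec) (rule carrier_vecI, simp add: dQ)
    finally show ?thesis .
  qed
  have Dtr: "transpose_mat D *\<^sub>v r = 0\<^sub>v k"
  proof -
    have "transpose_mat D = transpose_mat S * transpose_mat Q" unfolding DQS using dQ dS by (simp add: transpose_dim)
    hence "transpose_mat D *\<^sub>v r = transpose_mat S *\<^sub>v (transpose_mat Q *\<^sub>v r)" using dQ dS dr by (simp add: mv_assoc)
    also have "\<dots> = 0\<^sub>v k" unfolding Qtr using mv_zero[of "transpose_mat S"] dS by simp
    finally show ?thesis .
  qed
  have oneP: "(1\<^sub>m n - P) *\<^sub>v q = r"
  proof -
    have "(1\<^sub>m n - P) *\<^sub>v q = 1\<^sub>m n *\<^sub>v q - P *\<^sub>v q" using P dq by (simp add: mat_minus_mv carrier_matD)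
    thus ?thesis unfolding Pq r_def using dq by (simp add: one_mv)
  qed
  define b where "b = Q *\<^sub>v (X *\<^sub>v (transpose_mat U *\<^sub>v r))"
  have QtAtr: "transpose_mat Q *\<^sub>v (transpose_mat A *\<^sub>v r) = transpose_mat U *\<^sub>v r"
  proof -
    have "transpose_mat Q *\<^sub>v (transpose_mat A *\<^sub>v r) = transpose_mat (A * Q) *\<^sub>v r"
      using dQ dA dr by (simp add: mv_assoc transpose_dim)
    also have "transpose_mat (A * Q) = transpose_mat U + \<rho> \<cdot>\<^sub>m transpose_mat D"
      unfolding AQ using dU dD by (intro eq_matI) auto
    also have "(transpose_mat U + \<rho> \<cdot>\<^sub>m transpose_mat D) *\<^sub>v r = transpose_mat U *\<^sub>v r + \<rho> \<cdot>\<^sub>v (transpose_mat D *\<^sub>v r)"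
      using dU dD dr by (simp add: mat_plus_mv smat_mv)
    also have "\<dots> = transpose_mat U *\<^sub>v r" unfolding Dtr using dU by (intro eq_vecI) auto
    finally show ?thesis .
  qed
  have PAtr: "P *\<^sub>v (transpose_mat A *\<^sub>v r) = b"
    unfolding P_def b_def QtAtr[symmetric] using dQ dX dA dr by (simp add: mv_assoc)
  have Ar: "A *\<^sub>v r = A *\<^sub>v q - (U *\<^sub>v \<alpha> + \<rho> \<cdot>\<^sub>v (D *\<^sub>v \<alpha>))"
  proof -
    have "A *\<^sub>v r = A *\<^sub>v q - A *\<^sub>v (Q *\<^sub>v \<alpha>)" unfolding r_def using dA dQ dq d\<alpha> by (simp add: mv_minus)
    also have "A *\<^sub>v (Q *\<^sub>v \<alpha>) = (A * Q) *\<^sub>v \<alpha>" using dA dQ d\<alpha> by (simp add: mv_assoc)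
    also have "\<dots> = U *\<^sub>v \<alpha> + \<rho> \<cdot>\<^sub>v (D *\<^sub>v \<alpha>)" unfolding AQ using dU dD d\<alpha> by (simp add: mat_plus_mv smat_mv)
    finally show ?thesis .
  qed
  have IkE: "Ik \<rho> h u B A k = A *\<^sub>v r - \<rho> \<cdot>\<^sub>v b"
  proof -
    have "Ik \<rho> h u B A k = (A - \<rho> \<cdot>\<^sub>m (P * transpose_mat A)) *\<^sub>v r"
      unfolding Ik_def Let_def dB Pm q_def[symmetric] oneP ..
    also have "\<dots> = A *\<^sub>v r - \<rho> \<cdot>\<^sub>v (P *\<^sub>v (transpose_mat A *\<^sub>v r))"
      using dA P dr by (simp add: mat_minus_mv smat_mv mv_assoc carrier_matD)
    finally show ?thesis unfolding PAtr .
  qed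
  define a3 where "a3 = qv h u B (k - 1)"
  have da3: "dim_vec a3 = n" unfolding a3_def by (rule qd)
  have qk: "qprev h u B k = a3" unfolding qprev_def a3_def using k by simp
  define V where "V = transpose_mat U * Q - transpose_mat Q * D"
  have dV: "dim_row V = k" "dim_col V = k" unfolding V_def using dU dQ dD by auto
  have V\<alpha>: "V *\<^sub>v \<alpha> = transpose_mat U *\<^sub>v (Q *\<^sub>v \<alpha>) - transpose_mat Q *\<^sub>v (D *\<^sub>v \<alpha>)"
    unfolding V_def using dU dQ dD d\<alpha> by (simp add: mat_minus_mv mv_assoc)
  have colD: "col D m = dk dh u B m \<cdot>\<^sub>v qprev h u B m" if "m < k" for m
    using that dD qpd unfolding D_def by (intro eq_vecI) auto
  have colU: "col U j = u (Suc j)" if "j < k" for j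
    using that dU ud Uij by (intro eq_vecI) auto
  have Vjm: "V $$ (j,m) = vv h dh u B k m $ j" if j: "j < k" and m: "m < k" for j m
  proof -
    have "V $$ (j,m) = col U j \<bullet> col Q m - col Q j \<bullet> col D m"
      unfolding V_def using j m dU dQ dD by simp
    also have "\<dots> = u (Suc j) \<bullet> qv h u B m - dk dh u B m * (col Q j \<bullet> qprev h u B m)"
      unfolding colU[OF j] colQ[OF m] colD[OF m] using qpd dQ j by simp
    also have "\<dots> = vv h dh u B k m $ j"
      unfolding vv_def dB U_def[symmetric] Q_def[symmetric] using j dU dQ qd qpd colU[OF j] colQ[OF j] by simp
    finally show ?thesis .
  qed
  have W: "vec k (\<lambda>j. vv h dh u B k k $ j - (\<Sum>l=1..k. alph h u B k $ (l - 1) * vv h dh u B k (l - 1) $ j))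
      = transpose_mat U *\<^sub>v q - dk dh u B k \<cdot>\<^sub>v (transpose_mat Q *\<^sub>v a3) - V *\<^sub>v \<alpha>"
  proof (rule eq_vecI)
    fix j assume "j < dim_vec (transpose_mat U *\<^sub>v q - dk dh u B k \<cdot>\<^sub>v (transpose_mat Q *\<^sub>v a3) - V *\<^sub>v \<alpha>)"
    hence j: "j < k" using dU dQ dV by simp
    have e1: "vv h dh u B k k $ j = (transpose_mat U *\<^sub>v q) $ j - dk dh u B k * (transpose_mat Q *\<^sub>v a3) $ j"
      unfolding vv_def dB U_def[symmetric] Q_def[symmetric] q_def[symmetric] qk using j dU dQ by simp
    have e2: "(\<Sum>l=1..k. alph h u B k $ (l - 1) * vv h dh u B k (l - 1) $ j) = (\<Sum>m<k. \<alpha> $ m * vv h dh u B k m $ j)"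
      unfolding alph One_nat_def sum.atLeast1_atMost_eq by simp
    have e3: "(V *\<^sub>v \<alpha>) $ j = (\<Sum>m<k. \<alpha> $ m * vv h dh u B k m $ j)"
      using j d\<alpha> dV by (subst mv_idx) (auto simp: Vjm mult.commute intro!: sum.cong)
    show "vec k (\<lambda>j. vv h dh u B k k $ j - (\<Sum>l=1..k. alph h u B k $ (l - 1) * vv h dh u B k (l - 1) $ j)) $ j
      = (transpose_mat U *\<^sub>v q - dk dh u B k \<cdot>\<^sub>v (transpose_mat Q *\<^sub>v a3) - V *\<^sub>v \<alpha>) $ j"
    proof -
      have L: "vec k (\<lambda>j. vv h dh u B k k $ j - (\<Sum>l=1..k. alph h u B k $ (l - 1) * vv h dh u B k (l - 1) $ j)) $ j
        = vv h dh u B k k $ j - (\<Sum>l=1..k. alph h u B k $ (l - 1) * vv h dh u B k (l - 1) $ j)"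
        by (rule index_vec[OF j])
      have R: "(transpose_mat U *\<^sub>v q - dk dh u B k \<cdot>\<^sub>v (transpose_mat Q *\<^sub>v a3) - V *\<^sub>v \<alpha>) $ j
        = (transpose_mat U *\<^sub>v q) $ j - dk dh u B k * (transpose_mat Q *\<^sub>v a3) $ j - (V *\<^sub>v \<alpha>) $ j"
        using j dU dQ dV by simp
      show ?thesis unfolding L R e1 e2 e3 by simp
    qed
  qed (use dU dQ dV in simp)
  have k1: "k - 1 < k" using k by simp
  have a3Q: "Q *\<^sub>v unit_vec k (k - 1) = a3"
  proof -
    have "Q *\<^sub>v unit_vec (dim_col Q) (k - 1) = col Q (k - 1)" by (rule mv_unit) (use k1 dQ in simp)
    thus ?thesis unfolding dQ colQ[OF k1] a3_def .
  qed
  have Ma3: "Q *\<^sub>v (X *\<^sub>v (transpose_mat Q *\<^sub>v a3)) = a3"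
  proof -
    have "Q *\<^sub>v (X *\<^sub>v (transpose_mat Q *\<^sub>v a3)) = P *\<^sub>v a3"
      unfolding P_def using dQ dX da3 by (simp add: mv_assoc)
    also have "\<dots> = a3" unfolding a3Q[symmetric] by (rule PQv) (rule index_unit_vec(3))
    finally show ?thesis .
  qed
  have MD: "Q *\<^sub>v (X *\<^sub>v (transpose_mat Q *\<^sub>v (D *\<^sub>v \<alpha>))) = D *\<^sub>v \<alpha>"
  proof -
    have DS: "D *\<^sub>v \<alpha> = Q *\<^sub>v (S *\<^sub>v \<alpha>)" unfolding DQS using dQ dS d\<alpha> by (simp add: mv_assoc)
    have "Q *\<^sub>v (X *\<^sub>v (transpose_mat Q *\<^sub>v (D *\<^sub>v \<alpha>))) = P *\<^sub>v (D *\<^sub>v \<alpha>)"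
      unfolding P_def using dQ dX dD d\<alpha> by (simp add: mv_assoc)
    also have "\<dots> = D *\<^sub>v \<alpha>" unfolding DS by (rule PQv) (use dS in simp)
    finally show ?thesis .
  qed
  define c1 where "c1 = Q *\<^sub>v (X *\<^sub>v (transpose_mat U *\<^sub>v q))"
  define c2 where "c2 = Q *\<^sub>v (X *\<^sub>v (transpose_mat U *\<^sub>v (Q *\<^sub>v \<alpha>)))"
  have bc: "b = c1 - c2" unfolding b_def c1_def c2_def r_def using dQ dX dU dq d\<alpha> by (simp add: mv_minus)
  have Mw: "(Q * X) *\<^sub>v (transpose_mat U *\<^sub>v q - dk dh u B k \<cdot>\<^sub>v (transpose_mat Q *\<^sub>v a3) - V *\<^sub>v \<alpha>)
      = c1 - dk dh u B k \<cdot>\<^sub>v a3 - (c2 - D *\<^sub>v \<alpha>)"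
  proof -
    have "(Q * X) *\<^sub>v (transpose_mat U *\<^sub>v q - dk dh u B k \<cdot>\<^sub>v (transpose_mat Q *\<^sub>v a3) - V *\<^sub>v \<alpha>)
      = c1 - dk dh u B k \<cdot>\<^sub>v (Q *\<^sub>v (X *\<^sub>v (transpose_mat Q *\<^sub>v a3))) - (c2 - Q *\<^sub>v (X *\<^sub>v (transpose_mat Q *\<^sub>v (D *\<^sub>v \<alpha>))))"
      unfolding V\<alpha> c1_def c2_def using dQ dX dU dq d\<alpha> da3 dD
      by (simp add: mv_assoc mv_minus mv_smult)
    thus ?thesis unfolding Ma3 MD .
  qed
  have T1: "vec n (\<lambda>i. (\<Sum>l=1..k. alph h u B k $ (l - 1) * u l $ i)) = U *\<^sub>v \<alpha>"
  proof (rule eq_vecI)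
    fix i assume "i < dim_vec (U *\<^sub>v \<alpha>)"
    hence i: "i < n" using dU by simp
    have "vec n (\<lambda>i. (\<Sum>l=1..k. alph h u B k $ (l - 1) * u l $ i)) $ i = (\<Sum>l=1..k. alph h u B k $ (l - 1) * u l $ i)"
      by (rule index_vec[OF i])
    also have "\<dots> = (\<Sum>m<k. \<alpha> $ m * u (Suc m) $ i)" unfolding alph One_nat_def sum.atLeast1_atMost_eq by simp
    also have "\<dots> = (U *\<^sub>v \<alpha>) $ i" using i dU d\<alpha> by (subst mv_idx) (auto simp: Uij mult.commute intro!: sum.cong)
    finally show "vec n (\<lambda>i. (\<Sum>l=1..k. alph h u B k $ (l - 1) * u l $ i)) $ i = (U *\<^sub>v \<alpha>) $ i" .
  qed (use dU in simp)
  have uk: "u (Suc k) = A *\<^sub>v q - (\<rho> * dk dh u B k) \<cdot>\<^sub>v a3" unfolding iter[of k] qk q_def ..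
  have QX: "Qm h u B k * pinv (transpose_mat (Qm h u B k) * Qm h u B k) = Q * X" unfolding Q_def X_def G_def ..
  have dc1: "dim_vec c1 = n" "dim_vec c2 = n" unfolding c1_def c2_def using dQ by auto
  have dUa: "dim_vec (U *\<^sub>v \<alpha>) = n" "dim_vec (D *\<^sub>v \<alpha>) = n" "dim_vec (A *\<^sub>v q) = n" using dU dD dA by auto
  show ?thesis unfolding QX W T1 Mw IkE Ar bc uk
    apply (intro eq_vecI)
     apply (simp add: dc1 dUa da3 dD dU dA)
     apply (simp add: algebra_simps)
    apply (simp add: dc1 dUa da3 dD dU dA)
    done
qed

theorem proposition4:
  fixes n p :: nat and \<rho> :: real and A B :: "real mat" and u0 :: "real vec"
    and h dh :: "nat \<Rightarrow> real \<Rightarrow> real vec \<Rightarrow> real"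
    and u :: "nat \<Rightarrow> real vec"
  assumes rho: "-1 \<le> \<rho>" "\<rho> \<le> 1"
    and A: "A \<in> carrier_mat n n"
    and B: "B \<in> carrier_mat n p"
    and u0: "u0 \<in> carrier_vec n"
    and init: "u 0 = u0"
    and iter: "\<And>k. u (Suc k) = A *\<^sub>v qv h u B k - (\<rho> * dk dh u B k) \<cdot>\<^sub>v qprev h u B k"
  shows "u 1 = A *\<^sub>v qv h u B 0 \<and> A *\<^sub>v qv h u B 0 = Ik \<rho> h u B A 0 \<and>
    (\<forall>k\<ge>1. u (Suc k) =
       vec n (\<lambda>i. (\<Sum>l=1..k. alph h u B k $ (l - 1) * u l $ i))
       + \<rho> \<cdot>\<^sub>v ((Qm h u B k * pinv (transpose_mat (Qm h u B k) * Qm h u B k)) *\<^sub>v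
            vec k (\<lambda>j. vv h dh u B k k $ j - (\<Sum>l=1..k. alph h u B k $ (l - 1) * vv h dh u B k (l - 1) $ j)))
       + Ik \<rho> h u B A k)"
proof -
  have dB: "dim_row B = n" using B by auto
  have uc: "u l \<in> carrier_vec n" for l
  proof (induction l)
    case 0 thus ?case using init u0 by simp
  next
    case (Suc l)
    have "dim_vec (qprev h u B l) = n" unfolding qprev_def qv_def happ_def dB by simp
    thus ?case unfolding iter[of l] using A by (intro carrier_vecI) simp
  qed
  have q0: "dim_vec (qv h u B 0) = n" unfolding qv_def happ_def dB by simp
  have part1: "u 1 = A *\<^sub>v qv h u B 0"
  proof -
    have "u 1 = A *\<^sub>v qv h u B 0 - (\<rho> * dk dh u B 0) \<cdot>\<^sub>v qprev h u B 0" using iter[of 0] by simp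
    also have "\<dots> = A *\<^sub>v qv h u B 0" unfolding dk_def qprev_def dB using A by (intro eq_vecI) auto
    finally show ?thesis .
  qed
  have part2: "A *\<^sub>v qv h u B 0 = Ik \<rho> h u B A 0"
  proof -
    have Q0: "Qm h u B 0 \<in> carrier_mat n 0" unfolding Qm_def dB by auto
    have P0: "Pm h u B 0 = 0\<^sub>m n n"
      unfolding Pm_def Let_def using Q0 by (intro eq_matI) (auto simp: scalar_prod_def)
    have e1: "A - \<rho> \<cdot>\<^sub>m (0\<^sub>m n n * transpose_mat A) = A" using A by (intro eq_matI) (auto simp: scalar_prod_def)
    have e2: "1\<^sub>m n - 0\<^sub>m n n = (1\<^sub>m n :: real mat)" by (intro eq_matI) auto
    show ?thesis unfolding Ik_def Let_def dB P0 e1 e2 using q0 by (simp add: one_mv)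
  qed
  have part3: "\<forall>k\<ge>1. u (Suc k) =
       vec n (\<lambda>i. (\<Sum>l=1..k. alph h u B k $ (l - 1) * u l $ i))
       + \<rho> \<cdot>\<^sub>v ((Qm h u B k * pinv (transpose_mat (Qm h u B k) * Qm h u B k)) *\<^sub>v
            vec k (\<lambda>j. vv h dh u B k k $ j - (\<Sum>l=1..k. alph h u B k $ (l - 1) * vv h dh u B k (l - 1) $ j)))
       + Ik \<rho> h u B A k"
    using main_step[OF A B uc iter] by blast
  show ?thesis using part1 part2 part3 by blast
qed

end
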